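(* Let $\mathbb{R}^n_s$ be $\mathbb{R}^n$ with a non-degenerate symmetric bilinear form of signature $(n-s,s)$, and let $G\subset\mathrm{Iso}(\mathbb{R}^n_s)\subset\mathrm{GL}_{n+1}(\mathbb{R})$ be a real Zariski-closed subgroup whose centralizer in $\mathrm{Iso}(\mathbb{R}^n_s)$ acts transitively on $\mathbb{R}^n$, with Lie algebra $\mathfrak{g}\subset\mathrm{Mat}_{n+1}(\mathbb{R})$. Then $G=I+\mathfrak{g}$ is an affine subspace of $\mathrm{Mat}_{n+1}(\mathbb{R})$; let $\nabla^G$ be the natural flat affine connection it inherits. Fix $p\in\mathbb{R}^n$, let $F_p=G.p$ (an affine subspace of $\mathbb{R}^n$), and let $\nabla$ be the pullback to $G$ of the natural flat affine connection of $F_p$ via the orbit map $\theta:G\to F_p$, $g\mapsto g.p$ (a diffeomorphism). Then $(G,\nabla^G)$ is affinely diffeomorphic to $(G,\nabla)$.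
   Context: Elements of $\mathrm{Iso}(\mathbb{R}^n_s)$ are affine maps $(I+A,v)$ identified with matrices $\begin{pmatrix}I+A&v\\0&1\end{pmatrix}$. *)

theory Defs
  imports "HOL-Analysis.Analysis"
begin

text \<open>Mat_{n+1}(R) is modelled as real^('n option)^('n option): the index None is the
  extra (n+1)-st coordinate, the indices Some i are the coordinates of R^n.\<close>

type_synonym 'n amat = "real ^ ('n option) ^ ('n option)"

text \<open>Standard non-degenerate symmetric bilinear form of signature (n-s,s):
  the coordinates in S (with card S = s) carry the sign -1.\<close>
definition sform :: "'n::finite set \<Rightarrow> real ^ 'n \<Rightarrow> real ^ 'n \<Rightarrow> real" where
  "sform S x y = (\<Sum>i\<in>UNIV. (if i \<in> S then -1 else 1) * x $ i * y $ i)"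

definition lin_part :: "'n::finite amat \<Rightarrow> real ^ 'n ^ 'n" where
  "lin_part M = (\<chi> i j. M $ Some i $ Some j)"

definition trans_part :: "'n::finite amat \<Rightarrow> real ^ 'n" where
  "trans_part M = (\<chi> i. M $ Some i $ None)"

definition Iso :: "'n::finite set \<Rightarrow> 'n amat set" where
  "Iso S = {M. (\<forall>j. M $ None $ Some j = 0) \<and> M $ None $ None = 1 \<and>
              (\<forall>x y. sform S (lin_part M *v x) (lin_part M *v y) = sform S x y)}"

definition ext :: "real ^ 'n::finite \<Rightarrow> real ^ ('n option)" where
  "ext x = (\<chi> j. case j of None \<Rightarrow> 1 | Some i \<Rightarrow> x $ i)"

definition act :: "'n::finite amat \<Rightarrow> real ^ 'n \<Rightarrow> real ^ 'n" where
  "act M x = (\<chi> i. (M *v ext x) $ Some i)"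

inductive_set poly_fun :: "('k::finite amat \<Rightarrow> real) set" where
  const: "(\<lambda>M. c) \<in> poly_fun"
| coord: "(\<lambda>M. M $ i $ j) \<in> poly_fun"
| add: "p \<in> poly_fun \<Longrightarrow> q \<in> poly_fun \<Longrightarrow> (\<lambda>M. p M + q M) \<in> poly_fun"
| mult: "p \<in> poly_fun \<Longrightarrow> q \<in> poly_fun \<Longrightarrow> (\<lambda>M. p M * q M) \<in> poly_fun"

definition zariski_closed :: "'k::finite amat set \<Rightarrow> bool" where
  "zariski_closed A \<longleftrightarrow> (\<exists>P \<subseteq> poly_fun. A = {M. \<forall>p\<in>P. p M = 0})"

definition matrix_subgroup :: "'k::finite amat set \<Rightarrow> bool" where
  "matrix_subgroup G \<longleftrightarrow> mat 1 \<in> G \<and> (\<forall>A\<in>G. invertible A \<and> matrix_inv A \<in> G) \<and>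
     (\<forall>A\<in>G. \<forall>B\<in>G. A ** B \<in> G)"

definition centralizer_in :: "'k::finite amat set \<Rightarrow> 'k amat set \<Rightarrow> 'k amat set" where
  "centralizer_in H G = {h \<in> H. \<forall>g\<in>G. h ** g = g ** h}"

primrec mat_pow :: "real ^ 'k ^ 'k \<Rightarrow> nat \<Rightarrow> real ^ 'k ^ 'k" where
  "mat_pow A 0 = mat 1"
| "mat_pow A (Suc k) = A ** mat_pow A k"

definition mat_exp :: "real ^ 'k::finite ^ 'k \<Rightarrow> real ^ 'k ^ 'k" where
  "mat_exp A = (\<Sum>k. (1 / fact k) *\<^sub>R mat_pow A k)"

definition lie_algebra :: "'k::finite amat set \<Rightarrow> 'k amat set" where
  "lie_algebra G = {A. \<forall>t::real. mat_exp (t *\<^sub>R A) \<in> G}"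

text \<open>A map between affine subspaces (with their natural flat affine connections) is
  affine iff it preserves affine combinations.\<close>
definition affine_on :: "'a::real_vector set \<Rightarrow> ('a \<Rightarrow> 'b::real_vector) \<Rightarrow> bool" where
  "affine_on A f \<longleftrightarrow> (\<forall>x\<in>A. \<forall>y\<in>A. \<forall>t::real.
      f ((1 - t) *\<^sub>R x + t *\<^sub>R y) = (1 - t) *\<^sub>R f x + t *\<^sub>R f y)"

end

theory Submission
  imports Defs "HOL-Computational_Algebra.Polynomial"
begin


lemma sum_option: "(\<Sum>j\<in>(UNIV::'n::finite option set). f j) = f None + (\<Sum>i\<in>UNIV. f (Some i))"
proof -
  have "(\<Sum>j\<in>(UNIV::'n option set). f j) = (\<Sum>j\<in>insert None (range Some). f j)"
    by (simp add: UNIV_option_conv[symmetric])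
  also have "\<dots> = f None + (\<Sum>j\<in>range Some. f j)"
    by (subst sum.insert) auto
  also have "(\<Sum>j\<in>range Some. f j) = (\<Sum>i\<in>UNIV. f (Some i))"
    by (subst sum.reindex) (auto simp: inj_on_def)
  finally show ?thesis .
qed

lemma act_eq: "act M x = lin_part M *v x + trans_part M"
  by (simp add: act_def lin_part_def trans_part_def matrix_vector_mult_def ext_def vec_eq_iff sum_option)

lemma ext_mult:
  assumes "\<forall>j. h$None$Some j = 0" "h$None$None = 1"
  shows "h *v ext x = ext (act h x)"
  unfolding vec_eq_iff
proof
  fix j :: "'a option"
  show "(h *v ext x) $ j = ext (act h x) $ j"
    using assms by (cases j) (simp_all add: matrix_vector_mult_def ext_def act_def sum_option)
qed

lemma Iso_bot: "h \<in> Iso S \<Longrightarrow> (\<forall>j. h$None$Some j = 0) \<and> h$None$None = 1"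
  by (simp add: Iso_def)

lemma act_mult:
  assumes "h \<in> Iso S"
  shows "act (g ** h) x = act g (act h x)"
proof -
  have "(g ** h) *v ext x = g *v (h *v ext x)" by (simp add: matrix_vector_mul_assoc)
  also have "\<dots> = g *v ext (act h x)" using ext_mult Iso_bot[OF assms] by metis
  finally show ?thesis by (simp add: act_def)
qed

lemma sform_add1: "sform S (x + y) z = sform S x z + sform S y z"
  by (simp add: sform_def sum.distrib[symmetric] algebra_simps)
lemma sform_add2: "sform S z (x + y) = sform S z x + sform S z y"
  by (simp add: sform_def sum.distrib[symmetric] algebra_simps)
lemma sform_diff1: "sform S (x - y) z = sform S x z - sform S y z"
  by (simp add: sform_def sum_subtractf[symmetric] algebra_simps)
lemma sform_diff2: "sform S z (x - y) = sform S z x - sform S z y"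
  by (simp add: sform_def sum_subtractf[symmetric] algebra_simps)
lemma sform_scale1: "sform S (c *\<^sub>R x) z = c * sform S x z"
  by (simp add: sform_def sum_distrib_left algebra_simps)
lemma sform_scale2: "sform S z (c *\<^sub>R x) = c * sform S z x"
  by (simp add: sform_def sum_distrib_left algebra_simps)
lemma sform_neg1: "sform S (- x) z = - sform S x z"
  by (simp add: sform_def sum_negf[symmetric])
lemma sform_neg2: "sform S z (- x) = - sform S z x"
  by (simp add: sform_def sum_negf[symmetric])
lemma sform_zero1: "sform S 0 z = 0" by (simp add: sform_def)
lemma sform_zero2: "sform S z 0 = 0" by (simp add: sform_def)
lemma sform_sym: "sform S x y = sform S y x"
  by (simp add: sform_def algebra_simps)
lemma sform_nondeg: assumes "\<forall>y. sform S z y = 0" shows "z = 0"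
proof -
  have "z $ i = 0" for i
  proof -
    have "sform S z (axis i 1) = (\<Sum>j\<in>UNIV. if j = i then (if i \<in> S then -1 else 1) * z $ i else 0)"
      unfolding sform_def by (rule sum.cong) (auto simp: axis_def)
    also have "\<dots> = (if i \<in> S then -1 else 1) * z $ i" by simp
    finally have "(if i \<in> S then -1 else (1::real)) * z $ i = 0" using assms by simp
    then show ?thesis by (cases "i \<in> S") auto
  qed
  then show ?thesis by (simp add: vec_eq_iff)
qed

lemmas sform_simps = sform_add1 sform_add2 sform_diff1 sform_diff2 sform_scale1 sform_scale2
  sform_neg1 sform_neg2 sform_zero1 sform_zero2



lemma act_diff: "act h y - act h z = lin_part h *v (y - z)"
  by (simp add: act_eq matrix_vector_mult_diff_distrib)

lemma core_lin:
  assumes g: "g \<in> Iso S" and comm: "\<forall>x. \<exists>h\<in>Iso S. h ** g = g ** h \<and> act h 0 = x"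
  shows "(lin_part g - mat 1) ** (lin_part g - mat 1) = 0 \<and> (lin_part g - mat 1) *v trans_part g = 0"
proof -
  define A where "A = lin_part g - mat 1"
  define v where "v = trans_part g"
  have Lx: "lin_part g *v x = x + A *v x" for x
    by (simp add: A_def matrix_vector_mult_diff_rdistrib)
  define d where "d x = act g x - x" for x
  have dx: "d x = A *v x + v" for x by (simp add: d_def act_eq Lx v_def)
  have pres: "\<And>h x y. h \<in> Iso S \<Longrightarrow> sform S (lin_part h *v x) (lin_part h *v y) = sform S x y"
    by (simp add: Iso_def)
  have c1: "sform S (d x) (d x) = sform S (d 0) (d 0)" for x
  proof -
    obtain h where h: "h \<in> Iso S" "h ** g = g ** h" "act h 0 = x" using comm by blast
    have "d x = act g (act h 0) - act h 0" by (simp add: d_def h)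
    also have "\<dots> = act (g ** h) 0 - act h 0" by (simp add: act_mult[OF h(1)])
    also have "\<dots> = act (h ** g) 0 - act h 0" by (simp add: h)
    also have "\<dots> = act h (act g 0) - act h 0" by (simp add: act_mult[OF g])
    also have "\<dots> = lin_part h *v d 0" by (simp add: act_diff d_def)
    finally show ?thesis using pres[OF h(1)] by simp
  qed
  have d0: "d 0 = v" by (simp add: dx)
  have c2: "sform S (A *v x) (A *v x) = 0 \<and> sform S (A *v x) v = 0" for x
  proof -
    have sy: "sform S v (A *v x) = sform S (A *v x) v" by (rule sform_sym)
    have Am: "A *v (- x) = - (A *v x)"
      by (metis add.right_neutral add_eq_0_iff matrix_vector_right_distrib matrix_vector_mult_0_right)
    have e1: "sform S (A *v x) (A *v x) + 2 * sform S (A *v x) v = 0"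
      using c1[of x] by (simp add: dx d0 sform_simps sy)
    have e2: "sform S (A *v x) (A *v x) - 2 * sform S (A *v x) v = 0"
      using c1[of "-x"] by (simp add: dx d0 sform_simps sy Am)
    from e1 e2 show ?thesis by linarith
  qed
  have c3: "sform S (A *v x) (A *v y) = 0" for x y
  proof -
    have sy: "sform S (A *v y) (A *v x) = sform S (A *v x) (A *v y)" by (rule sform_sym)
    show ?thesis using c2[of "x + y"] c2[of x] c2[of y]
      by (simp add: sform_simps matrix_vector_right_distrib sy)
  qed
  have skew: "sform S x (A *v y) + sform S (A *v x) y = 0" for x y
    using pres[OF g, of x y] c3[of x y] by (simp add: Lx sform_simps)
  have AA: "A *v (A *v x) = 0" for x
  proof (rule sform_nondeg, rule allI)
    fix y
    have "sform S (A *v x) (A *v y) + sform S (A *v (A *v x)) y = 0" by (rule skew)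
    then show "sform S (A *v (A *v x)) y = 0" using c3[of x y] by simp
  qed
  have Av: "A *v v = 0"
  proof (rule sform_nondeg, rule allI)
    fix y
    have "sform S v (A *v y) + sform S (A *v v) y = 0" by (rule skew)
    moreover have "sform S v (A *v y) = sform S (A *v y) v" by (rule sform_sym)
    ultimately show "sform S (A *v v) y = 0" using c2[of y] by simp
  qed
  have "A ** A = 0" unfolding matrix_eq
  proof
    fix x
    have "(A ** A) *v x = A *v (A *v x)" by (rule matrix_vector_mul_assoc[symmetric])
    then show "(A ** A) *v x = 0 *v x" using AA[of x] by simp
  qed
  with Av show ?thesis unfolding A_def[symmetric] v_def[symmetric] by blast
qed



lemma mm_radd: "(A + B) ** C = A ** C + B ** (C::real^'a^'b)"
  by (simp add: matrix_matrix_mult_def vec_eq_iff sum.distrib[symmetric] algebra_simps)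
lemma mm_ladd: "C ** (A + B) = C ** A + C ** (B::real^'a^'b)"
  by (rule matrix_add_ldistrib)
lemma mm_lscale: "(c *\<^sub>R A) ** B = c *\<^sub>R (A ** (B::real^'a^'b))"
  by (simp add: matrix_matrix_mult_def vec_eq_iff sum_distrib_left algebra_simps)
lemma mm_rscale: "A ** (c *\<^sub>R B) = c *\<^sub>R (A ** (B::real^'a^'b))"
  by (simp add: matrix_matrix_mult_def vec_eq_iff sum_distrib_left algebra_simps)

lemma prod1: "(mat 1 + A) ** (mat 1 + B) = mat 1 + (A + B + A ** (B::real^'a^'a))"
  by (simp add: mm_radd mm_ladd)

lemma core:
  assumes g: "g \<in> Iso S" and comm: "\<forall>x. \<exists>h\<in>Iso S. h ** g = g ** h \<and> act h 0 = x"
  shows "(g - mat 1) ** (g - mat 1) = 0"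
proof -
  define N where "N = g - mat 1"
  define A where "A = lin_part g - mat 1"
  define v where "v = trans_part g"
  from core_lin[OF g comm] have AA: "A ** A = 0" and Av: "A *v v = 0"
    unfolding A_def v_def by auto
  have bot: "\<forall>j. g$None$Some j = 0" "g$None$None = 1" using Iso_bot[OF g] by auto
  have N0: "N $ None $ j = 0" for j using bot by (cases j) (simp_all add: N_def mat_def)
  have NA: "N $ Some a $ Some b = A $ a $ b" for a b by (simp add: N_def A_def mat_def lin_part_def)
  have Nv: "N $ Some b $ None = v $ b" for b by (simp add: N_def v_def mat_def trans_part_def)
  have "(N ** N) $ i $ j = 0" for i j
  proof -
    have "(N ** N) $ i $ j = (\<Sum>b\<in>UNIV. N $ i $ Some b * N $ Some b $ j)"
      by (simp add: matrix_matrix_mult_def sum_option N0)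
    also have "\<dots> = 0"
    proof (cases i)
      case None then show ?thesis by (simp add: N0)
    next
      case (Some a)
      show ?thesis
      proof (cases j)
        case None
        have "(\<Sum>b\<in>UNIV. N $ i $ Some b * N $ Some b $ j) = (A *v v) $ a"
          by (simp add: Some None NA Nv matrix_vector_mult_def)
        then show ?thesis using Av by simp
      next
        case (Some c)
        have "(\<Sum>b\<in>UNIV. N $ i $ Some b * N $ Some b $ j) = (A ** A) $ a $ c"
          by (simp add: Some \<open>i = Some a\<close> NA matrix_matrix_mult_def)
        then show ?thesis using AA by simp
      qed
    qed
    finally show ?thesis .
  qed
  then show ?thesis by (simp add: vec_eq_iff N_def)
qed

lemma poly_line:
  assumes "p \<in> poly_fun"
  shows "\<exists>q. \<forall>t. p (X + t *\<^sub>R N) = poly q t"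
  using assms
proof induction
  case (const c) show ?case by (rule exI[of _ "[:c:]"]) simp
next
  case (coord i j) show ?case by (rule exI[of _ "[:X$i$j, N$i$j:]"]) (simp add: algebra_simps)
next
  case (add p q)
  then obtain a b where "\<forall>t. p (X + t *\<^sub>R N) = poly a t" "\<forall>t. q (X + t *\<^sub>R N) = poly b t" by blast
  then show ?case by (intro exI[of _ "a + b"]) simp
next
  case (mult p q)
  then obtain a b where "\<forall>t. p (X + t *\<^sub>R N) = poly a t" "\<forall>t. q (X + t *\<^sub>R N) = poly b t" by blast
  then show ?case by (intro exI[of _ "a * b"]) simp
qed

lemma zariski_line:
  assumes "zariski_closed G" "\<And>k::nat. X + real k *\<^sub>R N \<in> G"
  shows "X + t *\<^sub>R N \<in> G"
proof -
  obtain P where P: "P \<subseteq> poly_fun" "G = {M. \<forall>p\<in>P. p M = 0}"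
    using assms(1) unfolding zariski_closed_def by blast
  have "p (X + t *\<^sub>R N) = 0" if pP: "p \<in> P" for p
  proof -
    obtain q where q: "\<forall>t. p (X + t *\<^sub>R N) = poly q t" using poly_line[of p X N] P(1) pP by blast
    have "poly q (real k) = 0" for k using assms(2)[of k] q pP P(2) by auto
    have "q = 0"
    proof (rule ccontr)
      assume "q \<noteq> 0"
      then have "finite {x. poly q x = 0}" by (rule poly_roots_finite)
      moreover have "range real \<subseteq> {x. poly q x = 0}" using \<open>\<And>k. poly q (real k) = 0\<close> by auto
      ultimately have "finite (range real)" by (rule finite_subset[rotated])
      then show False using finite_imageD[of real UNIV] inj_of_nat by auto
    qed
    then show ?thesis using q by simp
  qed
  then show ?thesis using P(2) by auto
qed



lemma expand_W:
  fixes N M :: "real^'a^'a"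
  assumes NN: "N ** N = 0" and MM: "M ** M = 0"
  shows "(s *\<^sub>R N + t *\<^sub>R M + (s * t) *\<^sub>R (N ** M)) ** (s *\<^sub>R N + t *\<^sub>R M + (s * t) *\<^sub>R (N ** M))
     = (s * t) *\<^sub>R (N ** M + M ** N) + (s * t * t) *\<^sub>R (M ** N ** M) + (s * s * t) *\<^sub>R (N ** M ** N)
       + (s * s * t * t) *\<^sub>R (N ** M ** N ** M)"
proof -
  have NN': "X ** N ** N = 0" for X :: "real^'a^'a" by (metis NN matrix_mul_assoc times0_right)
  have MM': "X ** M ** M = 0" for X :: "real^'a^'a" by (metis MM matrix_mul_assoc times0_right)
  show ?thesis
    by (simp add: mm_radd mm_ladd mm_lscale mm_rscale matrix_mul_assoc NN MM NN' MM' algebra_simps)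
qed

lemma expand_X:
  fixes N M :: "real^'a^'a"
  assumes NN: "N ** N = 0"
  shows "(mat 1 + (1/2) *\<^sub>R N) ** (mat 1 + M) ** (mat 1 + (1/2) *\<^sub>R N)
     = mat 1 + (N + M) + (1/2) *\<^sub>R (N ** M + M ** N) + (1/4) *\<^sub>R (N ** M ** N)"
proof -
  have NN': "X ** N ** N = 0" for X :: "real^'a^'a" by (metis NN matrix_mul_assoc times0_right)
  show ?thesis
    by (simp add: mm_radd mm_ladd mm_lscale mm_rscale matrix_mul_assoc NN NN' algebra_simps) (simp add: vec_eq_iff)
qed



locale setting =
  fixes S :: "'n::finite set" and G :: "'n amat set"
  assumes iso: "G \<subseteq> Iso S" and grp: "matrix_subgroup G" and zar: "zariski_closed G"
    and trans: "\<forall>x y. \<exists>h\<in>centralizer_in (Iso S) G. act h x = y"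
begin

lemma one_in: "mat 1 \<in> G" using grp by (simp add: matrix_subgroup_def)
lemma mul_in: "A \<in> G \<Longrightarrow> B \<in> G \<Longrightarrow> A ** B \<in> G" using grp by (simp add: matrix_subgroup_def)

lemma comm: "g \<in> G \<Longrightarrow> \<forall>x. \<exists>h\<in>Iso S. h ** g = g ** h \<and> act h 0 = x"
proof
  fix x assume g: "g \<in> G"
  obtain h where h: "h \<in> centralizer_in (Iso S) G" "act h 0 = x" using trans by blast
  then show "\<exists>h\<in>Iso S. h ** g = g ** h \<and> act h 0 = x" using g by (auto simp: centralizer_in_def)
qed

lemma sqV: "mat 1 + N \<in> G \<Longrightarrow> N ** N = 0"
  using core[of "mat 1 + N" S] iso comm by auto

lemma natV: assumes "mat 1 + N \<in> G" shows "mat 1 + real k *\<^sub>R N \<in> G"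
proof (induction k)
  case 0 show ?case using one_in by simp
next
  case (Suc k)
  have NN: "N ** N = 0" using sqV assms .
  have "(mat 1 + N) ** (mat 1 + real k *\<^sub>R N) = mat 1 + real (Suc k) *\<^sub>R N"
  proof -
    have "(mat 1 + N) ** (mat 1 + real k *\<^sub>R N) = mat 1 + (N + real k *\<^sub>R N + N ** (real k *\<^sub>R N))"
      by (rule prod1)
    also have "\<dots> = mat 1 + real (Suc k) *\<^sub>R N" by (simp add: mm_rscale NN algebra_simps)
    finally show ?thesis .
  qed
  with mul_in[OF assms Suc.IH] show ?case by simp
qed

lemma scalV: assumes "mat 1 + N \<in> G" shows "mat 1 + t *\<^sub>R N \<in> G"
  using zariski_line[OF zar natV[OF assms]] .

lemma addV: assumes N: "mat 1 + N \<in> G" and M: "mat 1 + M \<in> G" shows "mat 1 + (N + M) \<in> G"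
proof -
  have NN: "N ** N = 0" using sqV N .
  have MM: "M ** M = 0" using sqV M .
  have E: "(s * t) *\<^sub>R (N ** M + M ** N) + (s * t * t) *\<^sub>R (M ** N ** M) + (s * s * t) *\<^sub>R (N ** M ** N)
       + (s * s * t * t) *\<^sub>R (N ** M ** N ** M) = 0" for s t
  proof -
    have "(mat 1 + s *\<^sub>R N) ** (mat 1 + t *\<^sub>R M) = mat 1 + (s *\<^sub>R N + t *\<^sub>R M + (s * t) *\<^sub>R (N ** M))"
      by (simp add: prod1 mm_lscale mm_rscale)
    moreover have "(mat 1 + s *\<^sub>R N) ** (mat 1 + t *\<^sub>R M) \<in> G"
      using mul_in scalV N M by blast
    ultimately have "mat 1 + (s *\<^sub>R N + t *\<^sub>R M + (s * t) *\<^sub>R (N ** M)) \<in> G" by simp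
    from sqV[OF this] show ?thesis using expand_W[OF NN MM, of s t] by simp
  qed
  have c: "(s * t) * (N ** M + M ** N)$i$j + (s * t * t) * (M ** N ** M)$i$j + (s * s * t) * (N ** M ** N)$i$j
       + (s * s * t * t) * (N ** M ** N ** M)$i$j = 0" for s t i j
    using arg_cong[OF E[of s t], of "\<lambda>X. X $ i $ j"] by simp
  have P: "N ** M + M ** N = 0" and R: "N ** M ** N = 0"
  proof -
    have "(N ** M + M ** N)$i$j = 0 \<and> (N ** M ** N)$i$j = 0" for i j
      using c[of 1 1 i j] c[of 1 "-1" i j] c[of "-1" 1 i j] c[of "-1" "-1" i j] by simp
    then show "N ** M + M ** N = 0" "N ** M ** N = 0" by (simp_all add: vec_eq_iff)
  qed
  have "(mat 1 + (1/2) *\<^sub>R N) ** (mat 1 + M) ** (mat 1 + (1/2) *\<^sub>R N) \<in> G"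
    using mul_in scalV N M by blast
  then show ?thesis using expand_X[OF NN, of M] P R by simp
qed

end


definition mn :: "real^'k^'j \<Rightarrow> real" where
  "mn X = (\<Sum>i\<in>UNIV. \<Sum>j\<in>UNIV. \<bar>X$i$j\<bar>)"

lemma mn_nonneg: "0 \<le> mn X" unfolding mn_def by (intro sum_nonneg) auto

lemma norm_mn: "norm X \<le> mn X"
proof -
  have "norm X = L2_set (\<lambda>i. norm (X$i)) UNIV" by (simp add: norm_vec_def)
  also have "\<dots> \<le> (\<Sum>i\<in>UNIV. norm (X$i))" by (rule L2_set_le_sum) auto
  also have "\<dots> \<le> mn X" unfolding mn_def by (intro sum_mono norm_le_l1_cart)
  finally show ?thesis .
qed

lemma mn_mult: "mn (X ** Y) \<le> mn X * mn (Y::real^'a^'b)"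
proof -
  have row: "(\<Sum>j\<in>UNIV. \<bar>Y$k$j\<bar>) \<le> mn Y" for k
    unfolding mn_def by (rule member_le_sum) (auto intro: sum_nonneg)
  have "mn (X ** Y) \<le> (\<Sum>i\<in>UNIV. \<Sum>j\<in>UNIV. \<Sum>k\<in>UNIV. \<bar>X$i$k\<bar> * \<bar>Y$k$j\<bar>)"
  proof -
    have "\<bar>(X ** Y)$i$j\<bar> \<le> (\<Sum>k\<in>UNIV. \<bar>X$i$k\<bar> * \<bar>Y$k$j\<bar>)" for i j
      unfolding matrix_matrix_mult_def by (simp add: abs_mult[symmetric] sum_abs)
    then show ?thesis unfolding mn_def by (intro sum_mono) auto
  qed
  also have "\<dots> = (\<Sum>i\<in>UNIV. \<Sum>k\<in>UNIV. \<bar>X$i$k\<bar> * (\<Sum>j\<in>UNIV. \<bar>Y$k$j\<bar>))"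
  proof -
    have "(\<Sum>j\<in>UNIV. \<Sum>k\<in>UNIV. \<bar>X$i$k\<bar> * \<bar>Y$k$j\<bar>) = (\<Sum>k\<in>UNIV. \<bar>X$i$k\<bar> * (\<Sum>j\<in>UNIV. \<bar>Y$k$j\<bar>))" for i
      by (subst sum.swap) (simp add: sum_distrib_left)
    then show ?thesis by simp
  qed
  also have "\<dots> \<le> (\<Sum>i\<in>UNIV. \<Sum>k\<in>UNIV. \<bar>X$i$k\<bar> * mn Y)"
    by (intro sum_mono mult_left_mono row) auto
  also have "\<dots> = mn X * mn Y" by (simp add: mn_def sum_distrib_right)
  finally show ?thesis .
qed

lemma mn_pow: "mn (mat_pow (A::real^'a^'a) k) \<le> mn (mat 1 :: real^'a^'a) * mn A ^ k"
proof (induction k)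
  case 0 show ?case by simp
next
  case (Suc k)
  have "mn (mat_pow A (Suc k)) \<le> mn A * mn (mat_pow A k)" using mn_mult by simp
  also have "\<dots> \<le> mn A * (mn (mat 1 :: real^'a^'a) * mn A ^ k)"
    by (intro mult_left_mono Suc mn_nonneg)
  finally show ?case by (simp add: algebra_simps)
qed

lemma mat_pow_scale: "mat_pow (t *\<^sub>R A) k = (t ^ k) *\<^sub>R mat_pow A k"
  by (induction k) (simp_all add: mm_lscale mm_rscale)

lemma exp_series: "mat_exp (t *\<^sub>R A) = (\<Sum>k. (t ^ k / fact k) *\<^sub>R mat_pow A k)"
  unfolding mat_exp_def mat_pow_scale by simp

lemma exp_bound:
  fixes A :: "real^'a^'a"
  shows "\<exists>K. \<forall>t. \<bar>t\<bar> \<le> 1 \<longrightarrow> norm (mat_exp (t *\<^sub>R A) - mat 1 - t *\<^sub>R A) \<le> t^2 * K"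
proof -
  define C where "C = mn (mat 1 :: real^'a^'a)"
  define a where "a = mn A"
  define b where "b k = C * (inverse (fact k) * a ^ k)" for k
  have C0: "0 \<le> C" and a0: "0 \<le> a" by (simp_all add: C_def a_def mn_nonneg)
  have b0: "0 \<le> b k" for k using C0 a0 by (simp add: b_def)
  have bsum: "summable b" unfolding b_def
    by (intro summable_mult summable_exp)
  have b2: "summable (\<lambda>k. b (k + 2))" using bsum by (rule summable_ignore_initial_segment)
  define K where "K = (\<Sum>k. b (k + 2))"
  have cb: "norm ((t ^ k / fact k) *\<^sub>R mat_pow A k) \<le> \<bar>t\<bar>^k * b k" for t k
  proof -
    have "norm ((t ^ k / fact k) *\<^sub>R mat_pow A k) = (\<bar>t\<bar>^k / fact k) * norm (mat_pow A k)"
      by (simp add: power_abs)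
    also have "\<dots> \<le> (\<bar>t\<bar>^k / fact k) * (C * a ^ k)"
      by (intro mult_left_mono order_trans[OF norm_mn]) (auto simp: C_def a_def mn_pow)
    finally show ?thesis by (simp add: b_def field_simps)
  qed
  have main: "norm (mat_exp (t *\<^sub>R A) - mat 1 - t *\<^sub>R A) \<le> t^2 * K" if t: "\<bar>t\<bar> \<le> 1" for t
  proof -
    define f where "f k = (t ^ k / fact k) *\<^sub>R mat_pow A k" for k
    have nsum: "summable (\<lambda>k. \<bar>t\<bar>^k * b k)"
    proof -
      have "summable (\<lambda>k. C * (inverse (fact k) * (\<bar>t\<bar> * a) ^ k))"
        by (intro summable_mult summable_exp)
      then show ?thesis by (simp add: b_def power_mult_distrib algebra_simps)
    qed
    have fsum: "summable f"
    proof (rule summable_comparison_test'[OF nsum])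
      fix n show "norm (f n) \<le> \<bar>t\<bar>^n * b n" unfolding f_def by (rule cb)
    qed
    have nsum2: "summable (\<lambda>k. \<bar>t\<bar>^(k+2) * b (k+2))"
      using nsum by (rule summable_ignore_initial_segment)
    have fn2: "summable (\<lambda>k. norm (f (k + 2)))"
    proof (rule summable_comparison_test'[OF nsum2])
      fix n show "norm (norm (f (n+2))) \<le> \<bar>t\<bar>^(n+2) * b (n+2)" unfolding f_def real_norm_def abs_norm_cancel by (rule cb)
    qed
    have fe: "f = (\<lambda>k. (t ^ k / fact k) *\<^sub>R mat_pow A k)" by (rule ext) (simp add: f_def)
    have "mat_exp (t *\<^sub>R A) = suminf f" by (simp add: exp_series fe)
    also have "\<dots> = (\<Sum>k. f (k + 2)) + (\<Sum>i<2. f i)" by (rule suminf_split_initial_segment[OF fsum])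
    also have "(\<Sum>i<2. f i) = mat 1 + t *\<^sub>R A" by (simp add: f_def numeral_2_eq_2)
    finally have eq: "mat_exp (t *\<^sub>R A) - mat 1 - t *\<^sub>R A = (\<Sum>k. f (k + 2))" by simp
    have "norm (\<Sum>k. f (k + 2)) \<le> (\<Sum>k. norm (f (k + 2)))" by (rule summable_norm[OF fn2])
    also have "\<dots> \<le> (\<Sum>k. \<bar>t\<bar>^(k+2) * b (k+2))"
    proof (rule suminf_le[OF _ fn2 nsum2])
      fix n show "norm (f (n+2)) \<le> \<bar>t\<bar>^(n+2) * b (n+2)" unfolding f_def by (rule cb)
    qed
    also have "\<dots> \<le> (\<Sum>k. t^2 * b (k+2))"
    proof (rule suminf_le[OF _ nsum2])
      show "summable (\<lambda>k. t^2 * b (k+2))" by (rule summable_mult[OF b2])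
      fix k
      have e: "\<bar>t\<bar>^(k+2) * b (k+2) = t^2 * (\<bar>t\<bar>^k * b (k+2))"
        by (simp add: power_add power2_abs power2_eq_square mult_ac)
      have "\<bar>t\<bar>^k \<le> 1" using t by (simp add: power_le_one)
      then have "\<bar>t\<bar>^k * b (k+2) \<le> 1 * b (k+2)" using b0[of "k+2"] by (rule mult_right_mono)
      then have "t^2 * (\<bar>t\<bar>^k * b (k+2)) \<le> t^2 * b (k+2)" by (intro mult_left_mono) auto
      then show "\<bar>t\<bar>^(k+2) * b (k+2) \<le> t^2 * b (k+2)" unfolding e .
    qed
    also have "\<dots> = t^2 * K" unfolding K_def by (rule suminf_mult[OF b2])
    finally show ?thesis using eq by simp
  qed
  then show ?thesis by blast
qed



lemma act_add: "act (X + Y) x = act X x + act Y x"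
  by (simp add: act_def vec_eq_iff matrix_vector_mult_def sum.distrib algebra_simps)
lemma act_scale: "act (c *\<^sub>R X) x = c *\<^sub>R act X x"
  by (simp add: act_def vec_eq_iff matrix_vector_mult_def sum_distrib_left algebra_simps)

lemma exp_nil:
  fixes X :: "real^'a^'a"
  assumes "X ** X = 0" shows "mat_exp X = mat 1 + X"
proof -
  have z: "mat_pow X n = 0" if nn: "n \<notin> {0, 1}" for n
  proof -
    obtain k where n: "n = Suc (Suc k)" using nn by (cases n; cases "n - 1") auto
    have "mat_pow X n = (X ** X) ** mat_pow X k" by (simp add: n matrix_mul_assoc)
    then show ?thesis using assms by simp
  qed
  have "mat_exp X = (\<Sum>n\<in>{0,1}. (1 / fact n) *\<^sub>R mat_pow X n)"
    unfolding mat_exp_def by (rule suminf_finite) (auto simp: z)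
  then show ?thesis by simp
qed

context setting
begin

definition V where "V = {N. mat 1 + N \<in> G}"

lemma subspace_V: "subspace V"
  unfolding subspace_def V_def
  using one_in addV scalV by auto

lemma lie_eq: "lie_algebra G = V"
proof
  show "V \<subseteq> lie_algebra G"
  proof
    fix N assume N: "N \<in> V"
    then have NN: "N ** N = 0" using sqV by (simp add: V_def)
    have "mat_exp (t *\<^sub>R N) \<in> G" for t
    proof -
      have "(t *\<^sub>R N) ** (t *\<^sub>R N) = 0" by (simp add: mm_lscale mm_rscale NN)
      then have "mat_exp (t *\<^sub>R N) = mat 1 + t *\<^sub>R N" by (rule exp_nil)
      then show ?thesis using scalV N by (simp add: V_def)
    qed
    then show "N \<in> lie_algebra G" by (simp add: lie_algebra_def)
  qed
next
  show "lie_algebra G \<subseteq> V"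
  proof
    fix A assume "A \<in> lie_algebra G"
    then have EA: "mat_exp (t *\<^sub>R A) \<in> G" for t by (simp add: lie_algebra_def)
    have cl: "closed V" by (rule closed_subspace[OF subspace_V])
    define u where "u m = inverse (real (Suc m))" for m
    define f where "f m = inverse (u m) *\<^sub>R (mat_exp (u m *\<^sub>R A) - mat 1)" for m
    have fV: "f m \<in> V" for m
    proof -
      have "mat_exp (u m *\<^sub>R A) - mat 1 \<in> V" using EA by (simp add: V_def)
      then show ?thesis unfolding f_def using subspace_V by (simp add: subspace_def)
    qed
    obtain K where K: "\<And>t. \<bar>t\<bar> \<le> 1 \<Longrightarrow> norm (mat_exp (t *\<^sub>R A) - mat 1 - t *\<^sub>R A) \<le> t^2 * K"
      using exp_bound[of A] by blast
    have upos: "0 < u m" and ule: "u m \<le> 1" for m by (simp_all add: u_def field_simps)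
    have bnd: "norm (f m - A) \<le> u m * K" for m
    proof -
      have "f m - A = inverse (u m) *\<^sub>R (mat_exp (u m *\<^sub>R A) - mat 1 - u m *\<^sub>R A)"
        using upos[of m] by (simp add: f_def algebra_simps)
      then have "norm (f m - A) = inverse (u m) * norm (mat_exp (u m *\<^sub>R A) - mat 1 - u m *\<^sub>R A)"
        using upos[of m] by simp
      also have "\<dots> \<le> inverse (u m) * ((u m)^2 * K)"
        using K[of "u m"] upos[of m] ule[of m] by (intro mult_left_mono) auto
      also have "\<dots> = u m * K" using upos[of m] by (simp add: power2_eq_square field_simps)
      finally show ?thesis .
    qed
    have "(\<lambda>m. u m * K) \<longlonglongrightarrow> 0"
      unfolding u_def by (intro tendsto_mult_left_zero LIMSEQ_inverse_real_of_nat)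
    moreover have ev: "eventually (\<lambda>m. norm (f m - A) \<le> u m * K) sequentially"
      using bnd by (simp add: always_eventually)
    ultimately have "(\<lambda>m. f m - A) \<longlonglongrightarrow> 0"
      using Lim_null_comparison[of "\<lambda>m. f m - A" "\<lambda>m. u m * K"] by blast
    then have "f \<longlonglongrightarrow> A" by (rule LIM_zero_cancel)
    then show "A \<in> V" using cl fV closed_sequentially by blast
  qed
qed

lemma affine_G: "g1 \<in> G \<Longrightarrow> g2 \<in> G \<Longrightarrow> a + b = 1 \<Longrightarrow> a *\<^sub>R g1 + b *\<^sub>R g2 \<in> G"
proof -
  assume g: "g1 \<in> G" "g2 \<in> G" "a + b = 1"
  have "g1 - mat 1 \<in> V" "g2 - mat 1 \<in> V" using g by (simp_all add: V_def)
  then have "a *\<^sub>R (g1 - mat 1) + b *\<^sub>R (g2 - mat 1) \<in> V" using subspace_V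
    by (simp add: subspace_def)
  moreover have "mat 1 + (a *\<^sub>R (g1 - mat 1) + b *\<^sub>R (g2 - mat 1)) = a *\<^sub>R g1 + b *\<^sub>R g2"
  proof -
    have "a *\<^sub>R (g1 - mat 1) + b *\<^sub>R (g2 - mat 1) = a *\<^sub>R g1 + b *\<^sub>R g2 - (a + b) *\<^sub>R (mat 1 :: 'n amat)"
      by (simp add: algebra_simps)
    then show ?thesis using g(3) by simp
  qed
  ultimately show ?thesis by (simp add: V_def)
qed

lemma inj_theta: "inj_on (\<lambda>g. act g p) G"
proof (rule inj_onI)
  fix g1 g2 assume g: "g1 \<in> G" "g2 \<in> G" and eq: "act g1 p = act g2 p"
  have I1: "g1 \<in> Iso S" and I2: "g2 \<in> Iso S" using g iso by auto
  have all: "act g1 y = act g2 y" for y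
  proof -
    obtain h where h: "h \<in> centralizer_in (Iso S) G" "act h p = y" using trans by blast
    have hI: "h \<in> Iso S" and c1: "h ** g1 = g1 ** h" and c2: "h ** g2 = g2 ** h"
      using h(1) g by (auto simp: centralizer_in_def)
    have "act g1 y = act (g1 ** h) p" using act_mult[OF hI] h(2) by simp
    also have "\<dots> = act (h ** g1) p" using c1 by simp
    also have "\<dots> = act h (act g1 p)" using act_mult[OF I1] by simp
    also have "\<dots> = act h (act g2 p)" using eq by simp
    also have "\<dots> = act (h ** g2) p" using act_mult[OF I2] by simp
    also have "\<dots> = act (g2 ** h) p" using c2 by simp
    also have "\<dots> = act g2 y" using act_mult[OF hI] h(2) by simp
    finally show ?thesis .
  qed
  have tr: "trans_part g1 = trans_part g2" using all[of 0] by (simp add: act_eq)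
  have "lin_part g1 *v x = lin_part g2 *v x" for x using all[of x] tr by (simp add: act_eq)
  then have lp: "lin_part g1 = lin_part g2" by (simp add: matrix_eq)
  have "g1 $ a $ b = g2 $ a $ b" for a b
  proof (cases a)
    case None then show ?thesis using Iso_bot[OF I1] Iso_bot[OF I2] by (cases b) auto
  next
    case (Some i)
    show ?thesis
    proof (cases b)
      case None then show ?thesis using Some arg_cong[OF tr, of "\<lambda>v. v $ i"] by (simp add: trans_part_def)
    next
      case (Some j) then show ?thesis using \<open>a = Some i\<close> arg_cong[OF lp, of "\<lambda>M. M $ i $ j"]
        by (simp add: lin_part_def)
    qed
  qed
  then show "g1 = g2" by (simp add: vec_eq_iff)
qed

end



theorem corollary4p3:
  fixes S :: "'n::finite set" and G :: "'n amat set" and p :: "real ^ 'n"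
  assumes "G \<subseteq> Iso S"
    and "matrix_subgroup G"
    and "zariski_closed G"
    and "\<forall>x y. \<exists>h\<in>centralizer_in (Iso S) G. act h x = y"
  shows "subspace (lie_algebra G)
    \<and> G = (\<lambda>A. mat 1 + A) ` lie_algebra G
    \<and> affine ((\<lambda>g. act g p) ` G)
    \<and> bij_betw (\<lambda>g. act g p) G ((\<lambda>g. act g p) ` G)
    \<and> (\<exists>\<phi>. bij_betw \<phi> G G
         \<and> affine_on G ((\<lambda>g. act g p) \<circ> \<phi>)
         \<and> affine_on ((\<lambda>g. act g p) ` G) (inv_into G \<phi> \<circ> inv_into G (\<lambda>g. act g p)))"
proof -
  interpret setting S G using assms by unfold_locales
  define th where "th g = act g p" for g :: "'n amat"
  have th_aff: "th ((1 - t) *\<^sub>R x + t *\<^sub>R y) = (1 - t) *\<^sub>R th x + t *\<^sub>R th y" for t x y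
    by (simp add: th_def act_add act_scale)
  have inj: "inj_on th G" using inj_theta[of p] unfolding th_def by simp
  have s1: "subspace (lie_algebra G)" using subspace_V lie_eq by simp
  have s2: "G = (\<lambda>A. mat 1 + A) ` lie_algebra G"
  proof
    show "G \<subseteq> (\<lambda>A. mat 1 + A) ` lie_algebra G"
    proof
      fix g assume "g \<in> G"
      then have "g - mat 1 \<in> lie_algebra G" by (simp add: lie_eq V_def)
      then show "g \<in> (\<lambda>A. mat 1 + A) ` lie_algebra G" by (rule rev_image_eqI) simp
    qed
    show "(\<lambda>A. mat 1 + A) ` lie_algebra G \<subseteq> G" by (auto simp: lie_eq V_def)
  qed
  have s3: "affine (th ` G)"
    unfolding affine_def
  proof (intro ballI allI impI)
    fix x y and u v :: real assume x: "x \<in> th ` G" and y: "y \<in> th ` G" and uv: "u + v = 1"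
    obtain g1 g2 where g: "g1 \<in> G" "g2 \<in> G" "x = th g1" "y = th g2" using x y by blast
    have "u *\<^sub>R g1 + v *\<^sub>R g2 \<in> G" by (rule affine_G[OF g(1,2) uv])
    moreover have "th (u *\<^sub>R g1 + v *\<^sub>R g2) = u *\<^sub>R x + v *\<^sub>R y"
      by (simp add: th_def act_add act_scale g)
    ultimately show "u *\<^sub>R x + v *\<^sub>R y \<in> th ` G" by (metis image_eqI)
  qed
  have s4: "bij_betw th G (th ` G)" using inj by (simp add: bij_betw_imageI)
  have s5: "bij_betw id G G \<and> affine_on G (th \<circ> id) \<and> affine_on (th ` G) (inv_into G id \<circ> inv_into G th)"
  proof (intro conjI)
    show "bij_betw id G G" by simp
    show "affine_on G (th \<circ> id)" unfolding affine_on_def using th_aff by simp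
    show "affine_on (th ` G) (inv_into G id \<circ> inv_into G th)"
      unfolding affine_on_def
    proof (intro ballI allI)
      fix x y t assume x: "x \<in> th ` G" and y: "y \<in> th ` G"
      obtain g1 g2 where g: "g1 \<in> G" "g2 \<in> G" "x = th g1" "y = th g2" using x y by blast
      have zG: "(1 - t) *\<^sub>R g1 + t *\<^sub>R g2 \<in> G" by (rule affine_G[OF g(1,2)]) simp
      have iid: "inv_into G id z = z" if "z \<in> G" for z
        using inv_into_f_f[of id G z] that by simp
      have ith: "inv_into G th (th z) = z" if "z \<in> G" for z using inv_into_f_f[OF inj that] .
      have "(1 - t) *\<^sub>R x + t *\<^sub>R y = th ((1 - t) *\<^sub>R g1 + t *\<^sub>R g2)" using th_aff g by simp
      then show "(inv_into G id \<circ> inv_into G th) ((1 - t) *\<^sub>R x + t *\<^sub>R y) =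
          (1 - t) *\<^sub>R (inv_into G id \<circ> inv_into G th) x + t *\<^sub>R (inv_into G id \<circ> inv_into G th) y"
        using zG g by (simp add: ith iid)
    qed
  qed
  have thf: "(\<lambda>g. act g p) = th" by (simp add: th_def fun_eq_iff)
  show ?thesis unfolding thf using s1 s2 s3 s4 s5 by blast
qed

end
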